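(* For $L\in\{0,1,2,\dots\}$, $0<p<1$ and $r\in\mathbb R_{\ge0}$, let $$\mathcal X(L,p,r):=\mathbb P\!\left(Z_1+\frac{Z_2}{2}+\dots+\frac{Z_L}{2^{L-1}}<r\right),$$ where $Z_1,\dots,Z_L$ are i.i.d. geometric random variables with parameter $p$. Then, with $\lambda:=-\log(1-p)$, $$\mathcal X(L,p,r)\le\mathbb P\big(Y_\infty<(r+3)\lambda\big)+\mathcal N\exp(-2^L\lambda).$$
   Context: A geometric random variable with parameter $p$ takes value $k\in\{0,1,2,\dots\}$ with probability $p(1-p)^k$. Let $W_1,W_2,\dots$ be i.i.d. standard exponential random variables ($\mathbb P(W_i\ge x)=e^{-x}$) and $Y_\infty:=\sum_{i\ge0}W_{i+1}/2^i$. Let $\mathcal N:=\prod_{j\ge1}\frac{2^j}{2^j-1}$. $\log$ is the natural logarithm. *)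

theory Defs
  imports "HOL-Probability.Probability"
begin

text \<open>X(L,p,r) = P(Z_1 + Z_2/2 + ... + Z_L/2^(L-1) < r), Z_i iid geometric(p) on {0,1,..},
  P(Z=k) = p(1-p)^k. Index i<L corresponds to Z_(i+1).\<close>
definition calX :: "nat \<Rightarrow> real \<Rightarrow> real \<Rightarrow> real" where
  "calX L p r = measure_pmf.prob (Pi_pmf {..<L} 0 (\<lambda>_. geometric_pmf p))
      {z. (\<Sum>i<L. real (z i) / 2 ^ i) < r}"

text \<open>Law of iid standard exponentials W_1, W_2, ... (W_(i+1) is coordinate i).\<close>
definition expPi :: "(nat \<Rightarrow> real) measure" where
  "expPi = PiM UNIV (\<lambda>_. density lborel (exponential_density 1))"

definition Yinf :: "(nat \<Rightarrow> real) \<Rightarrow> real" where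
  "Yinf w = (\<Sum>i. w i / 2 ^ i)"

definition calN :: real where
  "calN = prodinf (\<lambda>j. 2 ^ (j+1) / (2 ^ (j+1) - 1))"

end

theory Submission imports Defs begin

abbreviation "EM \<equiv> density lborel (exponential_density (1::real))"

lemma EM_prob: "prob_space EM"
  by (rule prob_space_exponential_density) simp

lemma EM_atMost: "emeasure EM {..a} = ennreal (if 0 \<le> a then 1 - exp (- a) else 0)"
  using emeasure_erlang_density[of 1 0 a] by (simp add: erlang_CDF_def)

lemma EM_greaterThan: "0 \<le> a \<Longrightarrow> emeasure EM {a<..} = ennreal (exp (- a))"
proof -
  interpret prob_space EM by (rule EM_prob)
  assume a: "0 \<le> a"
  have "{a<..} = space EM - {..a}" by auto
  then have "emeasure EM {a<..} = emeasure EM (space EM) - emeasure EM {..a}"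
    by (simp add: emeasure_Diff)
  also have "\<dots> = ennreal 1 - ennreal (1 - exp (-a))" using a EM_atMost[of a] emeasure_space_1 by simp
  also have "\<dots> = ennreal (exp (-a))" using a by (subst ennreal_minus) auto
  finally show ?thesis .
qed

definition phi :: "real \<Rightarrow> real \<Rightarrow> nat" where
  "phi l x = nat (\<lceil>x / l\<rceil> - 1)"

lemma phi_meas[measurable]: "phi l \<in> measurable borel (count_space UNIV)"
  unfolding phi_def by measurable

lemma phi_ge: "0 < l \<Longrightarrow> x / l - 1 \<le> real (phi l x)"
proof -
  have "x / l \<le> of_int \<lceil>x/l\<rceil>" by (rule le_of_int_ceiling)
  moreover have "real_of_int (\<lceil>x/l\<rceil> - 1) \<le> real (nat (\<lceil>x/l\<rceil> - 1))"
    by (cases "\<lceil>x/l\<rceil> - 1 \<ge> 0") auto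
  ultimately show ?thesis unfolding phi_def by linarith
qed

lemma EM_Ioc: "0 \<le> a \<Longrightarrow> a \<le> b \<Longrightarrow> emeasure EM {a<..b} = ennreal (exp (-a) - exp (-b))"
proof -
  interpret prob_space EM by (rule EM_prob)
  assume a: "0 \<le> a" "a \<le> b"
  have "{a<..b} = {a<..} - {b<..}" by auto
  then have "emeasure EM {a<..b} = emeasure EM {a<..} - emeasure EM {b<..}"
    using a by (simp, intro emeasure_Diff) (auto simp: emeasure_finite)
  also have "\<dots> = ennreal (exp (-a)) - ennreal (exp (-b))" using a EM_greaterThan[of a] EM_greaterThan[of b]
    by simp
  also have "\<dots> = ennreal (exp (-a) - exp (-b))" by (subst ennreal_minus) auto
  finally show ?thesis .
qed

lemma exp_nat_mult_ln: "0 < p \<Longrightarrow> p < 1 \<Longrightarrow> exp (- (real k * (- ln (1 - p)))) = (1 - p) ^ k"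
  by (simp add: exp_of_nat_mult)

lemma geom_coupling:
  assumes p: "0 < p" "p < 1"
  shows "distr EM (count_space UNIV) (phi (- ln (1 - p))) = measure_pmf (geometric_pmf p)"
proof (rule measure_eqI_countable[where A=UNIV])
  define l where "l = - ln (1 - p)"
  have l: "0 < l" using p by (simp add: l_def)
  have el: "exp (- l) = 1 - p" using p by (simp add: l_def)
  fix k :: nat
  have pg: "pmf (geometric_pmf p) k = (1-p)^k * p"
    using pmf_geometric[OF p(1) less_imp_le[OF p(2)]] .
  have "emeasure EM (phi l -` {k} \<inter> space EM) = ennreal (pmf (geometric_pmf p) k)"
  proof (cases "k = 0")
    case True
    have "phi l x = 0 \<longleftrightarrow> x \<in> {..l}" for x
    proof -
      have "phi l x = 0 \<longleftrightarrow> \<lceil>x/l\<rceil> \<le> 1" by (auto simp: phi_def)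
      also have "\<dots> \<longleftrightarrow> x / l \<le> 1" by (simp add: ceiling_le_iff)
      also have "\<dots> \<longleftrightarrow> x \<le> l" using l by (simp add: pos_divide_le_eq)
      finally show ?thesis by simp
    qed
    then have "phi l -` {k} \<inter> space EM = {..l}" using True by (simp add: set_eq_iff)
    then show ?thesis using EM_atMost[of l] l el True pg by (simp add: less_imp_le)
  next
    case False
    have "phi l x = k \<longleftrightarrow> x \<in> {real k * l<..(real k + 1) * l}" for x
    proof -
      have "phi l x = k \<longleftrightarrow> \<lceil>x/l\<rceil> = int k + 1" using False by (auto simp: phi_def)
      also have "\<dots> \<longleftrightarrow> real k < x/l \<and> x/l \<le> real k + 1" by (simp add: ceiling_eq_iff)
      also have "\<dots> \<longleftrightarrow> real k * l < x \<and> x \<le> (real k + 1) * l" using l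
        by (simp add: pos_less_divide_eq pos_divide_le_eq)
      finally show ?thesis by simp
    qed
    then have "phi l -` {k} \<inter> space EM = {real k * l<..(real k + 1) * l}" by (simp add: set_eq_iff)
    moreover have "exp (- (real k * l)) - exp (- ((real k + 1) * l)) = (1 - p) ^ k * p"
    proof -
      have "exp (- ((real k + 1) * l)) = exp (- (real k * l)) * exp (- l)"
        by (simp add: algebra_simps flip: exp_add)
      moreover have "exp (- (real k * l)) = (1 - p) ^ k"
        using exp_nat_mult_ln[OF p, of k] by (simp add: l_def)
      ultimately show ?thesis using el by (simp add: algebra_simps)
    qed
    moreover have "emeasure EM {real k * l<..(real k + 1) * l} = ennreal (exp (- (real k * l)) - exp (- ((real k + 1) * l)))"
      by (rule EM_Ioc) (use l in auto)
    ultimately show ?thesis using pg by simp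
  qed
  then show "emeasure (distr EM (count_space UNIV) (phi (- ln (1 - p)))) {k} = emeasure (measure_pmf (geometric_pmf p)) {k}"
    by (simp add: emeasure_distr l_def emeasure_pmf_single)
qed auto

lemma Pi_pmf_PiM:
  assumes fin: "finite I"
  shows "distr (measure_pmf (Pi_pmf I d (\<lambda>_. q))) (PiM I (\<lambda>_. count_space UNIV)) (\<lambda>x. restrict x I)
         = PiM I (\<lambda>_. measure_pmf q)"
proof (rule product_sigma_finite.PiM_eqI)
  show "product_sigma_finite (\<lambda>_. measure_pmf q)"
    by (intro product_prob_space.axioms(1) product_prob_spaceI) (rule measure_pmf.prob_space_axioms)
  show "sets (distr (measure_pmf (Pi_pmf I d (\<lambda>_. q))) (PiM I (\<lambda>_. count_space UNIV)) (\<lambda>x. restrict x I))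
        = sets (PiM I (\<lambda>_. measure_pmf q))"
    by (simp, intro sets_PiM_cong) simp_all
  fix A assume A: "\<And>i. i \<in> I \<Longrightarrow> A i \<in> sets (measure_pmf q)"
  have "Pi\<^sub>E I A \<in> sets (Pi\<^sub>M I (\<lambda>i. count_space UNIV))"
    using A by (intro sets_PiM_I_finite fin) auto
  hence "emeasure (distr (measure_pmf (Pi_pmf I d (\<lambda>_. q))) (Pi\<^sub>M I (\<lambda>i. count_space UNIV))
          (\<lambda>x. restrict x I)) (Pi\<^sub>E I A) =
         emeasure (measure_pmf (Pi_pmf I d (\<lambda>_. q))) ((\<lambda>x. restrict x I) -` Pi\<^sub>E I A)"
    by (subst emeasure_distr) (auto simp: space_PiM)
  also have "\<dots> = emeasure (measure_pmf (Pi_pmf I d (\<lambda>_. q))) (PiE_dflt I d A)"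
    by (intro emeasure_eq_AE AE_pmfI) (auto simp: PiE_dflt_def set_Pi_pmf fin)
  also have "\<dots> = (\<Prod>i\<in>I. emeasure (measure_pmf q) (A i))"
    by (simp add: measure_pmf.emeasure_eq_measure measure_Pi_pmf_PiE_dflt fin prod_ennreal)
  finally show "emeasure (distr (measure_pmf (Pi_pmf I d (\<lambda>_. q))) (PiM I (\<lambda>_. count_space UNIV)) (\<lambda>x. restrict x I)) (Pi\<^sub>E I A)
     = (\<Prod>i\<in>I. emeasure (measure_pmf q) (A i))" .
qed (rule fin)

lemma expPi_prob: "prob_space expPi"
  unfolding expPi_def by (intro prob_space_PiM EM_prob)

lemma sets_expPi: "sets expPi = sets (PiM UNIV (\<lambda>_. EM))"
  unfolding expPi_def ..

lemma calX_eq: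
  assumes p: "0 < p" "p < 1"
  defines "l \<equiv> - ln (1 - p)"
  shows "calX L p r = measure expPi {w \<in> space expPi. (\<Sum>i<L. real (phi l (w i)) / 2 ^ i) < r}"
proof -
  define I where "I = {..<L}"
  define q where "q = geometric_pmf p"
  define S where "S = {g \<in> space (PiM I (\<lambda>_. count_space UNIV)). (\<Sum>i<L. real (g i) / 2 ^ i) < (r::real)}"
  have finI: "finite I" by (simp add: I_def)
  have S_sets: "S \<in> sets (PiM I (\<lambda>_. count_space (UNIV::nat set)))"
    unfolding S_def I_def by measurable
  have S_sets': "S \<in> sets (PiM I (\<lambda>_. measure_pmf q))"
    using S_sets by (subst sets_PiM_cong[of I I "\<lambda>_. measure_pmf q" "\<lambda>_. count_space UNIV"]) auto
  have pm: "phi l \<in> EM \<rightarrow>\<^sub>M measure_pmf q"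
      using phi_meas[of l] by (simp add: measurable_def)
  have cm: "compose I (phi l) \<in> PiM I (\<lambda>_. EM) \<rightarrow>\<^sub>M PiM I (\<lambda>_. measure_pmf q)"
    unfolding compose_def
  proof (intro measurable_restrict)
    fix i assume "i \<in> I"
    then show "(\<lambda>x. phi l (x i)) \<in> PiM I (\<lambda>_. EM) \<rightarrow>\<^sub>M measure_pmf q"
      using measurable_compose[OF measurable_component_singleton[of i I "\<lambda>_. EM"] pm] by simp
  qed
  have "calX L p r = measure (Pi_pmf I 0 (\<lambda>_. q)) {z. (\<Sum>i<L. real (z i) / 2 ^ i) < r}"
    unfolding calX_def I_def q_def ..
  also have "\<dots> = measure (distr (measure_pmf (Pi_pmf I 0 (\<lambda>_. q))) (PiM I (\<lambda>_. count_space UNIV)) (\<lambda>x. restrict x I)) S"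
    using S_sets
    by (subst measure_distr) (auto simp: S_def space_PiM I_def intro!: arg_cong2[where f=measure])
  also have "\<dots> = measure (PiM I (\<lambda>_. measure_pmf q)) S"
    by (simp add: Pi_pmf_PiM finI)
  also have "PiM I (\<lambda>_. measure_pmf q) = PiM I (\<lambda>_. distr EM (measure_pmf q) (phi l))"
  proof (intro PiM_cong refl)
    have "distr EM (measure_pmf q) (phi l) = distr EM (count_space UNIV) (phi l)"
      by (intro distr_cong) auto
    then show "measure_pmf q = distr EM (measure_pmf q) (phi l)"
      using geom_coupling[OF p] by (simp add: q_def l_def)
  qed
  also have "\<dots> = distr (PiM I (\<lambda>_. EM)) (PiM I (\<lambda>_. measure_pmf q)) (compose I (phi l))"
  proof (rule distr_PiM_finite_prob_space'[symmetric])
    show "phi l \<in> EM \<rightarrow>\<^sub>M measure_pmf q"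
      using phi_meas[of l] by (simp add: measurable_def)
  qed (auto simp: finI EM_prob measure_pmf.prob_space_axioms)
  also have "measure \<dots> S = measure (PiM I (\<lambda>_. EM)) (compose I (phi l) -` S \<inter> space (PiM I (\<lambda>_. EM)))"
  proof (rule measure_distr[OF _ S_sets'])
    show "compose I (phi l) \<in> PiM I (\<lambda>_. EM) \<rightarrow>\<^sub>M PiM I (\<lambda>_. measure_pmf q)"
      using cm by simp
  qed
  also have "measure (PiM I (\<lambda>_. EM)) (compose I (phi l) -` S \<inter> space (PiM I (\<lambda>_. EM)))
     = measure expPi ((\<lambda>\<omega>. \<lambda>n\<in>I. \<omega> (id n)) -` (compose I (phi l) -` S \<inter> space (PiM I (\<lambda>_. EM))) \<inter> space expPi)"
  proof -
    have PE: "PiM I (\<lambda>_. EM) = distr expPi (PiM I (\<lambda>_. EM)) (\<lambda>\<omega>. \<lambda>n\<in>I. \<omega> (id n))"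
      unfolding expPi_def by (rule distr_PiM_reindex[symmetric]) (auto simp: EM_prob)
    have "measure (PiM I (\<lambda>_. EM)) (compose I (phi l) -` S \<inter> space (PiM I (\<lambda>_. EM))) =
      measure (distr expPi (PiM I (\<lambda>_. EM)) (\<lambda>\<omega>. \<lambda>n\<in>I. \<omega> (id n))) (compose I (phi l) -` S \<inter> space (PiM I (\<lambda>_. EM)))"
      by (subst (1) PE) (rule refl)
    also have "\<dots> = measure expPi ((\<lambda>\<omega>. \<lambda>n\<in>I. \<omega> (id n)) -` (compose I (phi l) -` S \<inter> space (PiM I (\<lambda>_. EM))) \<inter> space expPi)"
    proof (rule measure_distr)
      show "(\<lambda>\<omega>. \<lambda>n\<in>I. \<omega> (id n)) \<in> expPi \<rightarrow>\<^sub>M Pi\<^sub>M I (\<lambda>_. EM)"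
        unfolding expPi_def by (intro measurable_restrict measurable_component_singleton) auto
      show "compose I (phi l) -` S \<inter> space (Pi\<^sub>M I (\<lambda>_. EM)) \<in> sets (Pi\<^sub>M I (\<lambda>_. EM))"
        using cm S_sets' by (rule measurable_sets)
    qed
    finally show ?thesis .
  qed
  also have "(\<lambda>\<omega>. \<lambda>n\<in>I. \<omega> (id n)) -` (compose I (phi l) -` S \<inter> space (PiM I (\<lambda>_. EM))) \<inter> space expPi
     = {w \<in> space expPi. (\<Sum>i<L. real (phi l (w i)) / 2 ^ i) < r}"
    by (auto simp: S_def I_def compose_def space_PiM expPi_def)
  finally show ?thesis .
qed

lemma EM_tail: "emeasure EM {y. a < max 0 y} \<le> ennreal (exp (- a))"
proof (cases "0 \<le> a")
  case True
  have "{y. a < max 0 y} = {a<..}" using True by auto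
  then show ?thesis using EM_greaterThan[OF True] by simp
next
  case False
  interpret prob_space EM by (rule EM_prob)
  have "emeasure EM {y. a < max 0 y} \<le> 1"
    using emeasure_space_1 emeasure_mono[of "{y. a < max 0 y}" "space EM" EM] by simp
  also have "1 \<le> ennreal (exp (- a))" using False by simp
  finally show ?thesis .
qed

lemma EM_mgf:
  assumes s: "0 \<le> s" "s < 1"
  shows "(\<integral>\<^sup>+ y. ennreal (exp (s * max 0 y)) \<partial>EM) = ennreal (1 / (1 - s))"
proof -
  have "(\<integral>\<^sup>+ y. ennreal (exp (s * max 0 y)) \<partial>EM) =
     (\<integral>\<^sup>+ y. ennreal (exponential_density 1 y) * ennreal (exp (s * max 0 y)) \<partial>lborel)"
    by (rule nn_integral_density) auto
  also have "\<dots> = (\<integral>\<^sup>+ y. ennreal (1 / (1 - s)) * ennreal (exponential_density (1 - s) y) \<partial>lborel)"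
  proof (intro nn_integral_cong)
    fix y :: real
    show "ennreal (exponential_density 1 y) * ennreal (exp (s * max 0 y)) =
          ennreal (1 / (1 - s)) * ennreal (exponential_density (1 - s) y)"
    proof (cases "y < 0")
      case True then show ?thesis by (simp add: exponential_density_def)
    next
      case False
      have "exponential_density 1 y * exp (s * max 0 y) = exp (- y) * exp (s * y)"
        using False by (simp add: exponential_density_def)
      also have "\<dots> = exp (- y * (1 - s))" by (simp add: algebra_simps flip: exp_add)
      also have "\<dots> = 1 / (1 - s) * ((1 - s) * exp (- y * (1 - s)))" using s by simp
      also have "\<dots> = 1 / (1 - s) * exponential_density (1 - s) y"
        using False by (simp add: exponential_density_def)
      finally have "exponential_density 1 y * exp (s * max 0 y) = 1 / (1 - s) * exponential_density (1 - s) y" .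
      then show ?thesis using s False
        by (simp add: exponential_density_def flip: ennreal_mult')
    qed
  qed
  also have "\<dots> = ennreal (1 / (1 - s)) * (\<integral>\<^sup>+ y. ennreal (exponential_density (1 - s) y) \<partial>lborel)"
    by (rule nn_integral_cmult) auto
  also have "(\<integral>\<^sup>+ y. ennreal (exponential_density (1 - s) y) \<partial>lborel) = 1"
  proof -
    interpret prob_space "density lborel (exponential_density (1 - s))"
      using s by (intro prob_space_exponential_density) simp
    show ?thesis using emeasure_space_1 by (simp add: emeasure_density)
  qed
  finally show ?thesis by simp
qed

definition cN :: "nat \<Rightarrow> real" where "cN j = 2 ^ (j+1) / (2 ^ (j+1) - 1)"

lemma two_pow_ge: "(1::real) \<le> 2 ^ (j+1) - 1"
proof -
  have "(2::real) ^ 1 \<le> 2 ^ (j+1)" by (rule power_increasing) auto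
  then show ?thesis by simp
qed

lemma aux_frac: assumes "(2::real) \<le> a" shows "1 \<le> a/(a-1)" "a/(a-1) - 1 = 1/(a-1)"
proof -
  have "a - 1 > 0" using assms by simp
  then show "1 \<le> a/(a-1)" "a/(a-1) - 1 = 1/(a-1)" by (simp_all add: field_simps)
qed

lemma two_le_pow: "(2::real) \<le> 2 ^ (j+1)"
  using two_pow_ge[of j] by simp

lemma cN_ge1: "1 \<le> cN j"
  unfolding cN_def by (rule aux_frac(1)[OF two_le_pow])

lemma cN_nn: "0 \<le> cN j"
  using cN_ge1[of j] by linarith

lemma calN_conv: "convergent_prod cN"
proof (intro abs_convergent_prod_imp_convergent_prod summable_imp_abs_convergent_prod)
  have "norm (cN i - 1) \<le> (1/2) ^ i" for i
  proof -
    have pos: "(1::real) \<le> 2 ^ (i+1) - 1" by (rule two_pow_ge)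
    have "cN i - 1 = 1 / (2 ^ (i+1) - 1)" unfolding cN_def by (rule aux_frac(2)[OF two_le_pow])
    moreover have "1 / (2 ^ (i+1) - 1) \<le> (1/2::real) ^ i"
    proof -
      have "(2::real) ^ i \<le> 2 ^ (i+1) - 1" using pos by simp
      then have "1 / (2 ^ (i+1) - 1) \<le> 1 / (2::real) ^ i"
        by (intro frac_le) auto
      then show ?thesis by (simp add: power_one_over)
    qed
    moreover have "0 \<le> cN i - 1" using cN_ge1[of i] by simp
    ultimately show ?thesis by simp
  qed
  then show "summable (\<lambda>i. norm (cN i - 1))"
    using summable_comparison_test[of "\<lambda>i. norm (cN i - 1)" "\<lambda>i. (1/2::real) ^ i"]
    by (simp add: summable_geometric)
qed

lemma prod_le_calN: "(\<Prod>j<m. cN j) \<le> calN"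
proof -
  have "calN = prodinf cN" unfolding calN_def cN_def ..
  moreover have "(\<Prod>j<m. cN j) \<le> prodinf cN"
    by (rule prod_le_prodinf) (use calN_conv cN_ge1 in \<open>auto intro: order_trans[OF zero_le_one]\<close>)
  ultimately show ?thesis by simp
qed

lemma calN_ge1: "1 \<le> calN" using prod_le_calN[of 0] by simp

lemma EM_mgf2:
  assumes "1 \<le> i"
  shows "(\<integral>\<^sup>+ y. ennreal (exp (max 0 y / 2 ^ i)) \<partial>EM) = ennreal (cN (i - 1))"
proof -
  have h: "(1::real) / 2 ^ i < 1" using assms by (simp add: field_simps)
  have "(\<integral>\<^sup>+ y. ennreal (exp (max 0 y / 2 ^ i)) \<partial>EM) = (\<integral>\<^sup>+ y. ennreal (exp ((1 / 2 ^ i) * max 0 y)) \<partial>EM)"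
    by (simp add: field_simps)
  also have "\<dots> = ennreal (1 / (1 - 1 / 2 ^ i))" using h by (intro EM_mgf) auto
  also have "1 / (1 - 1 / 2 ^ i) = cN (i - 1)"
  proof -
    have i: "i - 1 + 1 = i" using assms by simp
    have "(2::real) ^ i > 1" using assms by (simp add: one_less_power)
    then show ?thesis unfolding cN_def i by (simp add: field_simps)
  qed
  finally show ?thesis .
qed

lemma core:
  "emeasure (PiM {..<n} (\<lambda>_. EM)) {v \<in> space (PiM {..<n} (\<lambda>_. EM)). x < (\<Sum>i<n. max 0 (v i) / 2 ^ i)}
    \<le> ennreal (calN * exp (- x))"
proof (cases n)
  case 0
  interpret prob_space "PiM {..<n} (\<lambda>_. EM)" by (intro prob_space_PiM EM_prob)
  show ?thesis
  proof (cases "x < 0")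
    case True
    have "emeasure (PiM {..<n} (\<lambda>_. EM)) {v \<in> space (PiM {..<n} (\<lambda>_. EM)). x < (\<Sum>i<n. max 0 (v i) / 2 ^ i)} \<le> 1"
      by (rule emeasure_le_1)
    also have "1 \<le> ennreal (calN * exp (- x))"
    proof -
      have "1 \<le> calN * exp (- x)" using calN_ge1 True
        by (metis mult_mono' one_le_exp_iff neg_0_le_iff_le less_imp_le mult_1_right zero_le_one)
      then show ?thesis by simp
    qed
    finally show ?thesis .
  next
    case False
    then show ?thesis using 0 by simp
  qed
next
  case (Suc m)
  define J where "J = Suc ` {..<m}"
  have nJ: "{..<n} = insert 0 J" unfolding J_def Suc by (rule lessThan_Suc_eq_insert_0)
  have finJ: "finite J" "0 \<notin> J" unfolding J_def by auto
  interpret product_prob_space "\<lambda>_. EM" by (intro product_prob_spaceI EM_prob)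
  define S where "S = {v \<in> space (PiM (insert 0 J) (\<lambda>_. EM)). x < (\<Sum>i\<in>insert 0 J. max 0 (v i) / 2 ^ i)}"
  have S_sets: "S \<in> sets (PiM (insert 0 J) (\<lambda>_. EM))" unfolding S_def by measurable
  define V where "V v = (\<Sum>i\<in>J. max 0 (v i) / 2 ^ i)" for v :: "nat \<Rightarrow> real"
  have "emeasure (PiM {..<n} (\<lambda>_. EM)) {v \<in> space (PiM {..<n} (\<lambda>_. EM)). x < (\<Sum>i<n. max 0 (v i) / 2 ^ i)}
      = emeasure (PiM (insert 0 J) (\<lambda>_. EM)) S" unfolding S_def nJ ..
  also have "\<dots> = (\<integral>\<^sup>+ v. indicator S v \<partial>PiM (insert 0 J) (\<lambda>_. EM))"
    using S_sets by simp
  also have "\<dots> = (\<integral>\<^sup>+ v. (\<integral>\<^sup>+ y. indicator S (v(0 := y)) \<partial>EM) \<partial>PiM J (\<lambda>_. EM))"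
    using S_sets finJ by (intro product_nn_integral_insert) auto
  also have "\<dots> \<le> (\<integral>\<^sup>+ v. ennreal (exp (- x)) * (\<Prod>i\<in>J. ennreal (exp (max 0 (v i) / 2 ^ i))) \<partial>PiM J (\<lambda>_. EM))"
  proof (rule nn_integral_mono)
    fix v assume v: "v \<in> space (PiM J (\<lambda>_. EM))"
    have ind: "indicator S (v(0 := y)) = indicator {y. x - V v < max 0 y} y" for y :: real
    proof -
      have "v(0 := y) \<in> space (PiM (insert 0 J) (\<lambda>_. EM))"
        using v finJ by (auto simp: space_PiM PiE_def extensional_def)
      moreover have "(\<Sum>i\<in>insert 0 J. max 0 ((v(0 := y)) i) / 2 ^ i) = max 0 y + V v"
        using finJ by (simp add: V_def sum.insert, intro sum.cong) auto
      ultimately show ?thesis by (simp add: S_def indicator_def algebra_simps)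
    qed
    have "(\<integral>\<^sup>+ y. indicator S (v(0 := y)) \<partial>EM) = (\<integral>\<^sup>+ y. indicator {y. x - V v < max 0 y} y \<partial>EM)"
      by (rule nn_integral_cong) (rule ind)
    also have "\<dots> = emeasure EM {y. x - V v < max 0 y}"
    proof (rule nn_integral_indicator)
      have "{y \<in> space borel. x - V v < max 0 y} \<in> sets borel" by measurable
      then show "{y. x - V v < max 0 y} \<in> sets EM" by simp
    qed
    also have "\<dots> \<le> ennreal (exp (- (x - V v)))" by (rule EM_tail)
    also have "exp (- (x - V v)) = exp (- x) * (\<Prod>i\<in>J. exp (max 0 (v i) / 2 ^ i))"
    proof -
      have "exp (- (x - V v)) = exp (- x) * exp (V v)" by (simp add: mult_exp_exp)
      also have "exp (V v) = (\<Prod>i\<in>J. exp (max 0 (v i) / 2 ^ i))"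
        unfolding V_def using finJ by (simp add: exp_sum)
      finally show ?thesis .
    qed
    also have "ennreal \<dots> = ennreal (exp (- x)) * (\<Prod>i\<in>J. ennreal (exp (max 0 (v i) / 2 ^ i)))"
      by (simp add: ennreal_mult prod_ennreal prod_nonneg)
    finally show "(\<integral>\<^sup>+ y. indicator S (v(0 := y)) \<partial>EM) \<le> ennreal (exp (- x)) * (\<Prod>i\<in>J. ennreal (exp (max 0 (v i) / 2 ^ i)))" .
  qed
  also have "\<dots> = ennreal (exp (- x)) * (\<integral>\<^sup>+ v. (\<Prod>i\<in>J. ennreal (exp (max 0 (v i) / 2 ^ i))) \<partial>PiM J (\<lambda>_. EM))"
    by (rule nn_integral_cmult) measurable
  also have "(\<integral>\<^sup>+ v. (\<Prod>i\<in>J. ennreal (exp (max 0 (v i) / 2 ^ i))) \<partial>PiM J (\<lambda>_. EM))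
      = (\<Prod>i\<in>J. (\<integral>\<^sup>+ y. ennreal (exp (max 0 y / 2 ^ i)) \<partial>EM))"
    using finJ by (intro product_nn_integral_prod) auto
  also have "\<dots> = (\<Prod>i\<in>J. ennreal (cN (i - 1)))"
    using finJ by (intro prod.cong refl EM_mgf2) (auto simp: J_def)
  also have "\<dots> = ennreal (\<Prod>j<m. cN j)"
    unfolding J_def by (simp add: prod.reindex prod_ennreal cN_nn)
  also have "ennreal (exp (- x)) * ennreal (\<Prod>j<m. cN j) \<le> ennreal (calN * exp (- x))"
  proof -
    have "exp (- x) * (\<Prod>j<m. cN j) \<le> calN * exp (-x)"
      using mult_left_mono[OF prod_le_calN[of m], of "exp (-x)"] by (simp add: mult.commute)
    then have "ennreal (exp (- x) * (\<Prod>j<m. cN j)) \<le> ennreal (calN * exp (-x))"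
      by (rule ennreal_leI)
    then show ?thesis by (simp add: ennreal_mult'[symmetric] prod_nonneg cN_nn)
  qed
  finally show ?thesis .
qed

lemma space_expPi: "space expPi = UNIV"
  by (simp add: expPi_def space_PiM)

lemma core_measure:
  "measure (PiM {..<n} (\<lambda>_. EM)) {v \<in> space (PiM {..<n} (\<lambda>_. EM)). x < (\<Sum>i<n. max 0 (v i) / 2 ^ i)}
    \<le> calN * exp (- x)"
proof -
  interpret prob_space "PiM {..<n} (\<lambda>_. EM)" by (intro prob_space_PiM EM_prob)
  have c: "0 \<le> calN * exp (- x)" using calN_ge1 by simp
  show ?thesis using core[of n x] c by (simp add: emeasure_eq_measure)
qed

lemma Cn_measure:
  "measure expPi {w \<in> space expPi. x < (\<Sum>i<n. max 0 (w (L + i)) / 2 ^ i)} \<le> calN * exp (- x)"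
proof -
  have PE: "PiM {..<n} (\<lambda>_. EM) = distr expPi (PiM {..<n} (\<lambda>_. EM)) (\<lambda>\<omega>. \<lambda>i\<in>{..<n}. \<omega> (L + i))"
    unfolding expPi_def by (rule distr_PiM_reindex[symmetric]) (auto simp: EM_prob inj_on_def)
  define T where "T = {v \<in> space (PiM {..<n} (\<lambda>_. EM)). x < (\<Sum>i<n. max 0 (v i) / 2 ^ i)}"
  have T_sets: "T \<in> sets (PiM {..<n} (\<lambda>_. EM))" unfolding T_def by measurable
  have "measure (PiM {..<n} (\<lambda>_. EM)) T = measure (distr expPi (PiM {..<n} (\<lambda>_. EM)) (\<lambda>\<omega>. \<lambda>i\<in>{..<n}. \<omega> (L + i))) T"
    by (subst (1) PE) (rule refl)
  also have "\<dots> = measure expPi ((\<lambda>\<omega>. \<lambda>i\<in>{..<n}. \<omega> (L + i)) -` T \<inter> space expPi)"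
  proof (rule measure_distr[OF _ T_sets])
    show "(\<lambda>\<omega>. \<lambda>i\<in>{..<n}. \<omega> (L + i)) \<in> expPi \<rightarrow>\<^sub>M Pi\<^sub>M {..<n} (\<lambda>_. EM)"
      unfolding expPi_def by (intro measurable_restrict measurable_component_singleton) auto
  qed
  also have "(\<lambda>\<omega>. \<lambda>i\<in>{..<n}. \<omega> (L + i)) -` T \<inter> space expPi = {w \<in> space expPi. x < (\<Sum>i<n. max 0 (w (L + i)) / 2 ^ i)}"
    by (auto simp: T_def space_PiM space_expPi)
  finally show ?thesis using core_measure[of n x] unfolding T_def by simp
qed

lemma EM_abs: "(\<integral>\<^sup>+ y. ennreal \<bar>y\<bar> \<partial>EM) = 1"
proof -
  have "(\<integral>\<^sup>+ y. ennreal \<bar>y\<bar> \<partial>EM) = (\<integral>\<^sup>+ y. ennreal (exponential_density 1 y) * ennreal \<bar>y\<bar> \<partial>lborel)"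
    by (rule nn_integral_density) auto
  also have "\<dots> = (\<integral>\<^sup>+ y. ennreal (erlang_density 0 1 y * y ^ 1) \<partial>lborel)"
  proof (intro nn_integral_cong)
    fix y :: real
    show "ennreal (exponential_density 1 y) * ennreal \<bar>y\<bar> = ennreal (erlang_density 0 1 y * y ^ 1)"
      by (cases "y < 0") (auto simp: erlang_density_def ennreal_mult'[symmetric])
  qed
  also have "\<dots> = 1" using nn_integral_erlang_ith_moment[of 1 0 1] by simp
  finally show ?thesis .
qed

lemma expPi_component_nn:
  "(\<integral>\<^sup>+ w. g (w i) \<partial>expPi) = (\<integral>\<^sup>+ y. g y \<partial>EM)" if [measurable]: "g \<in> borel_measurable borel"
proof -
  have D: "distr expPi EM (\<lambda>w. w i) = EM"
    unfolding expPi_def by (rule distr_PiM_component) (auto simp: EM_prob)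
  have "(\<integral>\<^sup>+ y. g y \<partial>EM) = (\<integral>\<^sup>+ y. g y \<partial>distr expPi EM (\<lambda>w. w i))" by (simp add: D)
  also have "\<dots> = (\<integral>\<^sup>+ w. g (w i) \<partial>expPi)"
    by (rule nn_integral_distr) (auto simp: expPi_def)
  finally show ?thesis by simp
qed

lemma AE_summable: "AE w in expPi. summable (\<lambda>i. w i / 2 ^ i)"
proof -
  have meas: "(\<lambda>w. \<Sum>i. ennreal (\<bar>w i\<bar> / 2 ^ i)) \<in> borel_measurable expPi"
    unfolding expPi_def by measurable
  have "(\<integral>\<^sup>+ w. (\<Sum>i. ennreal (\<bar>w i\<bar> / 2 ^ i)) \<partial>expPi) = (\<Sum>i. (\<integral>\<^sup>+ w. ennreal (\<bar>w i\<bar> / 2 ^ i) \<partial>expPi))"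
    by (rule nn_integral_suminf) (auto simp: expPi_def)
  also have "\<dots> = (\<Sum>i. ennreal ((1/2) ^ i))"
  proof (intro suminf_cong)
    fix i :: nat
    have "(\<integral>\<^sup>+ w. ennreal (\<bar>w i\<bar> / 2 ^ i) \<partial>expPi) = (\<integral>\<^sup>+ y. ennreal (\<bar>y\<bar> / 2 ^ i) \<partial>EM)"
      by (rule expPi_component_nn) measurable
    also have "\<dots> = (\<integral>\<^sup>+ y. ennreal (1 / 2 ^ i) * ennreal \<bar>y\<bar> \<partial>EM)"
      by (intro nn_integral_cong) (simp add: ennreal_mult'[symmetric])
    also have "\<dots> = ennreal (1 / 2 ^ i) * (\<integral>\<^sup>+ y. ennreal \<bar>y\<bar> \<partial>EM)"
      by (rule nn_integral_cmult) auto
    also have "\<dots> = ennreal ((1/2) ^ i)" by (simp add: EM_abs power_one_over)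
    finally show "(\<integral>\<^sup>+ w. ennreal (\<bar>w i\<bar> / 2 ^ i) \<partial>expPi) = ennreal ((1/2) ^ i)" .
  qed
  also have "\<dots> = ennreal 2"
    by (intro suminf_ennreal_eq) (use geometric_sums[of "1/2::real"] in auto)
  finally have "(\<integral>\<^sup>+ w. (\<Sum>i. ennreal (\<bar>w i\<bar> / 2 ^ i)) \<partial>expPi) \<noteq> \<infinity>" by simp
  from nn_integral_noteq_infinite[OF meas this]
  show ?thesis
  proof (rule AE_mp, intro AE_I2 impI)
    fix w :: "nat \<Rightarrow> real"
    assume "(\<Sum>i. ennreal (\<bar>w i\<bar> / 2 ^ i)) \<noteq> \<infinity>"
    then have "summable (\<lambda>i. \<bar>w i\<bar> / 2 ^ i)" by (intro summable_suminf_not_top) auto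
    then have "summable (\<lambda>i. \<bar>w i / 2 ^ i\<bar>)" by simp
    then show "summable (\<lambda>i. w i / 2 ^ i)" by (rule summable_rabs_cancel)
  qed
qed

lemma tail_bound:
  assumes l: "0 < l"
  shows "measure expPi {w \<in> space expPi. l < (\<Sum>i. w (i + L) / 2 ^ (i + L))} \<le> calN * exp (- (2 ^ L * l))"
proof -
  interpret prob_space expPi by (rule expPi_prob)
  define Cn where "Cn n = {w \<in> space expPi. 2 ^ L * l < (\<Sum>i<n. max 0 (w (L + i)) / 2 ^ i)}" for n
  have Cn_sets: "Cn n \<in> sets expPi" for n
    unfolding Cn_def expPi_def by measurable
  have inc: "incseq Cn"
  proof (rule incseq_SucI)
    fix n
    show "Cn n \<subseteq> Cn (Suc n)"
    proof
      fix w assume w: "w \<in> Cn n"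
      have a: "2 ^ L * l < (\<Sum>i<n. max 0 (w (L + i)) / 2 ^ i)" using w by (simp add: Cn_def)
      have b: "(\<Sum>i<n. max 0 (w (L + i)) / 2 ^ i) \<le> (\<Sum>i<Suc n. max 0 (w (L + i)) / 2 ^ i)"
        by simp
      have "2 ^ L * l < (\<Sum>i<Suc n. max 0 (w (L + i)) / 2 ^ i)" using a b by linarith
      then show "w \<in> Cn (Suc n)" using w unfolding Cn_def by simp
    qed
  qed
  obtain N where N: "\<And>w. w \<in> space expPi - N \<Longrightarrow> summable (\<lambda>i. w i / 2 ^ i)" "N \<in> null_sets expPi"
    using AE_summable by (rule AE_E3) blast
  have sub: "{w \<in> space expPi. l < (\<Sum>i. w (i + L) / 2 ^ (i + L))} \<subseteq> (\<Union>n. Cn n) \<union> N"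
  proof
    fix w assume w: "w \<in> {w \<in> space expPi. l < (\<Sum>i. w (i + L) / 2 ^ (i + L))}"
    show "w \<in> (\<Union>n. Cn n) \<union> N"
    proof (cases "w \<in> N")
      case False
      define f where "f = (\<lambda>i. w (i + L) / 2 ^ (i + L))"
      have lt: "l < suminf f" using w by (simp add: f_def)
      have "summable (\<lambda>i. w i / 2 ^ i)" using N(1)[of w] w False by simp
      then have sf: "summable f" unfolding f_def by (subst summable_iff_shift)
      then have "(\<lambda>n. \<Sum>i<n. f i) \<longlonglongrightarrow> suminf f" by (rule summable_LIMSEQ)
      then have "eventually (\<lambda>n. l < (\<Sum>i<n. f i)) sequentially"
        using lt by (rule order_tendstoD)
      then obtain n where n: "l < (\<Sum>i<n. f i)" by (auto simp: eventually_sequentially)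
      have "2 ^ L * l < 2 ^ L * (\<Sum>i<n. f i)" using n by simp
      also have "2 ^ L * (\<Sum>i<n. f i) = (\<Sum>i<n. w (L + i) / 2 ^ i)"
        unfolding f_def sum_distrib_left by (intro sum.cong refl) (simp add: power_add add.commute)
      also have "\<dots> \<le> (\<Sum>i<n. max 0 (w (L + i)) / 2 ^ i)"
        by (intro sum_mono divide_right_mono) auto
      finally have "w \<in> Cn n" using w by (simp add: Cn_def)
      then show ?thesis by blast
    qed simp
  qed
  have "measure expPi {w \<in> space expPi. l < (\<Sum>i. w (i + L) / 2 ^ (i + L))} \<le> measure expPi ((\<Union>n. Cn n) \<union> N)"
    using sub Cn_sets N(2) by (intro finite_measure_mono) auto
  also have "\<dots> = measure expPi (\<Union>n. Cn n)"
    using Cn_sets N(2) by (intro measure_Un_null_set) auto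
  also have "\<dots> \<le> calN * exp (- (2 ^ L * l))"
  proof (rule LIMSEQ_le_const2)
    show "(\<lambda>n. measure expPi (Cn n)) \<longlonglongrightarrow> measure expPi (\<Union>n. Cn n)"
      using Cn_sets inc by (intro finite_Lim_measure_incseq) auto
    show "\<exists>N. \<forall>n\<ge>N. measure expPi (Cn n) \<le> calN * exp (- (2 ^ L * l))"
      unfolding Cn_def using Cn_measure by blast
  qed
  finally show ?thesis .
qed

lemma geom_partial_le2: "(\<Sum>i<L. (1/2::real) ^ i) \<le> 2"
proof -
  have "(\<Sum>i<L. (1/2::real) ^ i) \<le> (\<Sum>i. (1/2::real) ^ i)"
    by (intro sum_le_suminf) (auto simp: summable_geometric)
  also have "\<dots> = 2" using suminf_geometric[of "1/2::real"] by simp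
  finally show ?thesis .
qed

lemma Yinf_meas: "Yinf \<in> borel_measurable expPi"
  unfolding Yinf_def expPi_def by measurable

theorem lemma15:
  fixes L :: nat and p r :: real
  assumes "0 < p" "p < 1" "0 \<le> r"
  shows "calX L p r \<le>
    measure expPi {w \<in> space expPi. Yinf w < (r + 3) * (- ln (1 - p))}
    + calN * exp (- (2 ^ L) * (- ln (1 - p)))"
proof -
  define l where "l = - ln (1 - p)"
  have l: "0 < l" using assms by (simp add: l_def)
  interpret prob_space expPi by (rule expPi_prob)
  define A where "A = {w \<in> space expPi. (\<Sum>i<L. real (phi l (w i)) / 2 ^ i) < r}"
  define B where "B = {w \<in> space expPi. Yinf w < (r + 3) * l}"
  define C where "C = {w \<in> space expPi. l < (\<Sum>i. w (i + L) / 2 ^ (i + L))}"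
  have B_sets: "B \<in> sets expPi" unfolding B_def using Yinf_meas by measurable
  have C_sets: "C \<in> sets expPi" unfolding C_def expPi_def by measurable
  obtain N where N: "\<And>w. w \<in> space expPi - N \<Longrightarrow> summable (\<lambda>i. w i / 2 ^ i)" "N \<in> null_sets expPi"
    using AE_summable by (rule AE_E3) blast
  have sub: "A \<subseteq> (B \<union> C) \<union> N"
  proof
    fix w assume w: "w \<in> A"
    show "w \<in> (B \<union> C) \<union> N"
    proof (cases "w \<in> N")
      case False
      define g where "g = (\<lambda>i. w i / 2 ^ i)"
      have sg: "summable g" using N(1)[of w] w False by (simp add: A_def g_def)
      have "(\<Sum>i<L. g i) / l - 2 \<le> (\<Sum>i<L. g i) / l - (\<Sum>i<L. (1/2::real) ^ i)"
        using geom_partial_le2 by simp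
      also have "\<dots> = (\<Sum>i<L. (w i / l - 1) / 2 ^ i)"
        by (simp add: g_def sum_divide_distrib sum_subtractf diff_divide_distrib power_one_over mult.commute)
      also have "\<dots> \<le> (\<Sum>i<L. real (phi l (w i)) / 2 ^ i)"
        by (intro sum_mono divide_right_mono phi_ge l) simp
      also have "\<dots> < r" using w by (simp add: A_def)
      finally have "(\<Sum>i<L. g i) / l < r + 2" by simp
      then have SL: "(\<Sum>i<L. g i) < (r + 2) * l" using l by (simp add: divide_less_eq)
      have Y: "Yinf w = (\<Sum>i. g (i + L)) + (\<Sum>i<L. g i)"
        unfolding Yinf_def g_def[symmetric] by (rule suminf_split_initial_segment[OF sg])
      show ?thesis
      proof (cases "(\<Sum>i. g (i + L)) \<le> l")
        case True
        then have "Yinf w < (r + 3) * l" using Y SL by (simp add: algebra_simps)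
        then show ?thesis using w by (simp add: B_def A_def)
      next
        case False
        then show ?thesis using w by (simp add: C_def A_def g_def)
      qed
    qed simp
  qed
  have "calX L p r = measure expPi A"
    unfolding A_def l_def by (rule calX_eq) (use assms in auto)
  also have "\<dots> \<le> measure expPi ((B \<union> C) \<union> N)"
    using sub B_sets C_sets N(2) by (intro finite_measure_mono) auto
  also have "\<dots> = measure expPi (B \<union> C)"
    using B_sets C_sets N(2) by (intro measure_Un_null_set) auto
  also have "\<dots> \<le> measure expPi B + measure expPi C"
    using B_sets C_sets by (rule measure_Un_le)
  also have "measure expPi C \<le> calN * exp (- (2 ^ L * l))"
    unfolding C_def by (rule tail_bound[OF l])
  finally show ?thesis by (simp add: B_def l_def)
qed

end
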